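(* With $U_0,\Omega'_0,y,\Upsilon_y,S_1,S_2$ as in the context, one has on $\mathbb{K}^E$ $$dS_1\wedge dS_2=2\sin\Upsilon_y\,e^{-4U_0}\,d\Omega'_0\wedge\star d\Omega'_0,$$ and consequently the one-form $\mathbf{T}_1=\frac{1}{2\rho}S_1\star dS_2$ satisfies $$d(\rho\star\mathbf{T}_1)+\sin\Upsilon_y\,e^{-4U_0}\,d\Omega'_0\wedge\star d\Omega'_0=0,$$ i.e. the associated axially symmetric vector field $\vec T_1=T_1^\rho\partial_\rho+T_1^z\partial_z$ satisfies $\nabla_aT_1^a=-\psi_y\,e^{-4U_0}(d\Omega'_0,d\Omega'_0)_\gamma$ on $D_0$ off the axis, where $\psi_y=1/\sqrt{\rho^2+(z-y)^2}$.
   Context: Let $\mathbb{E}^3$ have cylindrical coordinates $(\rho,z,\phi)$ and flat metric $\gamma=d\rho^2+dz^2+\rho^2d\phi^2$, with covariant derivative $\nabla$. Let $\Sigma_0$ be a $C^1$ axially symmetric surface diffeomorphic to a 2-sphere, given by $\{\rho=\rho_0(\mu),z=z_0(\mu),\phi=\varphi\}$, $\mu\in[\mu_S,\mu_N]$, with $\mu_S<\mu_N$ the only zeros of $\rho_0$ and $z_S:=z_0(\mu_S)<z_N:=z_0(\mu_N)$; $D_0$ is its unbounded exterior region. A function $f$ on $D_0$ is regular if it is $C^2$ on $D_0$, has a $C^1$ extension to $D_0\cup\Sigma_0$, and $rf$ is bounded ($r=\sqrt{\rho^2+z^2}$). $\mathbb{K}=\{(\rho,z):\rho\ge0\}$ carries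 the metric $d\rho^2+dz^2$ and Hodge star with $\star d\rho=-dz$, $\star dz=d\rho$; axially symmetric functions and one-forms $T^\rho d\rho+T^zdz$ are identified with objects on $\mathbb{K}$; $\mathbb{K}^E$ is the projection of $D_0$. $U_0$ is an axially symmetric regular flat-harmonic function on $D_0$ and $\Omega'_0$ an axially symmetric regular solution of $\triangle_\gamma\Omega'_0-4(d\Omega'_0,dU_0)_\gamma=0$. For $y\in(z_S,z_N)$: $\cos\Upsilon_y=(z-y)/\sqrt{\rho^2+(z-y)^2}$, $\sin\Upsilon_y=\rho/\sqrt{\rho^2+(z-y)^2}$; $Z_y$ is the solution of $dZ_y=\cos\Upsilon_y\,dU_0+\sin\Upsilon_y\star dU_0$ vanishing at infinity; $S_1,S_2$ are the solutions vanishing at infinity of $dS_1=e^{-2U_0+2Z_y}[-(1+\cos\Upsilon_y)d\Omega'_0-\sin\Upsilon_y\star d\Omega'_0]$ and $dS_2=e^{-2U_0-2Z_y}[(1-\cos\Upsilon_y)d\Omega'_0-\sin\Upsilon_y\star d\Omega'_0]$. *)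

theory Defs
  imports "HOL-Analysis.Analysis"
begin

text \<open>An axially symmetric one-form T^rho d rho + T^z dz is represented by the pair
  (T^rho, T^z) :: real \<times> real.  Points of K are pairs (rho, z).\<close>

definition hodgeK :: "real \<times> real \<Rightarrow> real \<times> real" where
  "hodgeK w = (snd w, - fst w)"   \<comment> \<open>star d rho = - dz, star dz = d rho\<close>

definition wedgeK :: "real \<times> real \<Rightarrow> real \<times> real \<Rightarrow> real" where
  "wedgeK v w = fst v * snd w - snd v * fst w"  \<comment> \<open>coefficient of d rho /\ dz\<close>

definition dK :: "(real \<times> real) set \<Rightarrow> (real \<times> real \<Rightarrow> real) \<Rightarrow> real \<times> real \<Rightarrow> real \<times> real" where
  "dK A f p = (frechet_derivative f (at p within A) (1, 0),
               frechet_derivative f (at p within A) (0, 1))"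

definition d1K :: "(real \<times> real) set \<Rightarrow> (real \<times> real \<Rightarrow> real \<times> real) \<Rightarrow> real \<times> real \<Rightarrow> real" where
  "d1K A T p = frechet_derivative (\<lambda>q. snd (T q)) (at p within A) (1, 0)
             - frechet_derivative (\<lambda>q. fst (T q)) (at p within A) (0, 1)"
  \<comment> \<open>d(a d rho + b dz) = (b_rho - a_z) d rho /\ dz\<close>

definition cosUps :: "real \<Rightarrow> real \<times> real \<Rightarrow> real" where
  "cosUps y p = (snd p - y) / sqrt ((fst p)\<^sup>2 + (snd p - y)\<^sup>2)"

definition sinUps :: "real \<Rightarrow> real \<times> real \<Rightarrow> real" where
  "sinUps y p = fst p / sqrt ((fst p)\<^sup>2 + (snd p - y)\<^sup>2)"

definition psiY :: "real \<Rightarrow> real \<times> real \<Rightarrow> real" where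
  "psiY y p = 1 / sqrt ((fst p)\<^sup>2 + (snd p - y)\<^sup>2)"

type_synonym R3 = "real \<times> real \<times> real"

definition cylRho :: "R3 \<Rightarrow> real" where
  "cylRho q = sqrt ((fst q)\<^sup>2 + (fst (snd q))\<^sup>2)"

definition proj :: "R3 \<Rightarrow> real \<times> real" where
  "proj q = (cylRho q, snd (snd q))"

definition lift :: "(real \<times> real \<Rightarrow> real) \<Rightarrow> R3 \<Rightarrow> real" where
  "lift f q = f (proj q)"

text \<open>Axially symmetric vector field T^rho d_rho + T^z d_z, in Cartesian components
  (defined off the axis).\<close>
definition liftVec :: "(real \<times> real \<Rightarrow> real \<times> real) \<Rightarrow> R3 \<Rightarrow> R3" where
  "liftVec T q = (fst (T (proj q)) * fst q / cylRho q,
                  fst (T (proj q)) * fst (snd q) / cylRho q,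
                  snd (T (proj q)))"

definition pd3 :: "R3 \<Rightarrow> (R3 \<Rightarrow> real) \<Rightarrow> R3 \<Rightarrow> real" where
  "pd3 i g q = frechet_derivative g (at q) i"

definition lap3 :: "(R3 \<Rightarrow> real) \<Rightarrow> R3 \<Rightarrow> real" where
  "lap3 g q = (\<Sum>i\<in>Basis. pd3 i (pd3 i g) q)"

definition gammaProd :: "(R3 \<Rightarrow> real) \<Rightarrow> (R3 \<Rightarrow> real) \<Rightarrow> R3 \<Rightarrow> real" where
  "gammaProd f g q = (\<Sum>i\<in>Basis. pd3 i f q * pd3 i g q)"

definition div3 :: "(R3 \<Rightarrow> R3) \<Rightarrow> R3 \<Rightarrow> real" where
  "div3 F q = (\<Sum>i\<in>Basis. frechet_derivative F (at q) i \<bullet> i)"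

definition C1_on3 :: "R3 set \<Rightarrow> (R3 \<Rightarrow> real) \<Rightarrow> bool" where
  "C1_on3 A g \<longleftrightarrow> (\<forall>q\<in>A. g differentiable (at q)) \<and> (\<forall>i\<in>Basis. continuous_on A (pd3 i g))"

definition C2_on3 :: "R3 set \<Rightarrow> (R3 \<Rightarrow> real) \<Rightarrow> bool" where
  "C2_on3 A g \<longleftrightarrow> C1_on3 A g \<and> (\<forall>i\<in>Basis. C1_on3 A (pd3 i g))"

definition regular3 :: "R3 set \<Rightarrow> R3 set \<Rightarrow> (R3 \<Rightarrow> real) \<Rightarrow> bool" where
  "regular3 D Sig f \<longleftrightarrow> C2_on3 D f
     \<and> (\<exists>g. (\<forall>q\<in>D. g q = f q) \<and> continuous_on (D \<union> Sig) g
            \<and> (\<forall>i\<in>Basis. \<exists>h. continuous_on (D \<union> Sig) h \<and> (\<forall>q\<in>D. h q = pd3 i f q)))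
     \<and> bounded ((\<lambda>q. norm q * f q) ` D)"

definition Sigma0 :: "(real \<Rightarrow> real) \<Rightarrow> (real \<Rightarrow> real) \<Rightarrow> real \<Rightarrow> real \<Rightarrow> R3 set" where
  "Sigma0 rho0 z0 muS muN =
     {(rho0 mu * cos phi, rho0 mu * sin phi, z0 mu) | mu phi. muS \<le> mu \<and> mu \<le> muN}"

definition exteriorD :: "R3 set \<Rightarrow> R3 set" where
  "exteriorD Sig = \<Union> {C \<in> components (- Sig). \<not> bounded C}"

definition KE :: "R3 set \<Rightarrow> (real \<times> real) set" where
  "KE D = {p. 0 \<le> fst p \<and> (fst p, 0, snd p) \<in> D}"

end

theory Submission imports Defs begin

definition rot :: "real \<Rightarrow> R3 \<Rightarrow> R3" where
  "rot t q = (cos t * fst q - sin t * fst (snd q), sin t * fst q + cos t * fst (snd q), snd (snd q))"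

lemma rot_Sig: "rot t ` Sigma0 rho0 z0 muS muN \<subseteq> Sigma0 rho0 z0 muS muN"
proof
  fix x assume "x \<in> rot t ` Sigma0 rho0 z0 muS muN"
  then obtain mu phi where m: "muS \<le> mu" "mu \<le> muN" and x: "x = rot t (rho0 mu * cos phi, rho0 mu * sin phi, z0 mu)"
    unfolding Sigma0_def by auto
  have "x = (rho0 mu * cos (phi + t), rho0 mu * sin (phi + t), z0 mu)"
    unfolding x rot_def by (simp add: cos_add sin_add algebra_simps)
  then show "x \<in> Sigma0 rho0 z0 muS muN" unfolding Sigma0_def using m by blast
qed

lemma rot_rot: "rot (-t) (rot t q) = q"
proof -
  obtain a b c where q: "q = (a,b,c)" by (cases q) auto
  have cs: "cos t * cos t + sin t * sin t = 1" by (rule sin_cos_squared_add3)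
  have 1: "cos t * (cos t * a - sin t * b) + sin t * (sin t * a + cos t * b) = a"
    using cs by algebra
  have 2: "- (sin t * (cos t * a - sin t * b)) + cos t * (sin t * a + cos t * b) = b"
    using cs by algebra
  show ?thesis unfolding q rot_def cos_minus sin_minus fst_conv snd_conv
    using 1 2 by (simp only: mult_minus_left diff_minus_eq_add) 
qed

lemma norm3_sq: "(norm (x::real, y::real, z::real))\<^sup>2 = x\<^sup>2 + y\<^sup>2 + z\<^sup>2"
  by (simp add: norm_Pair)

lemma rot_aux: fixes c s a b :: real assumes "c * c + s * s = 1"
  shows "(c * a - s * b)\<^sup>2 + (s * a + c * b)\<^sup>2 = a\<^sup>2 + b\<^sup>2"
proof -
  have "(c * a - s * b)\<^sup>2 + (s * a + c * b)\<^sup>2 = (c * c + s * s) * (a\<^sup>2 + b\<^sup>2)"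
    by (simp add: power2_eq_square algebra_simps)
  then show ?thesis using assms by simp
qed

lemma norm_rot: "norm (rot t q) = norm q"
proof -
  obtain a b c where q: "q = (a,b,c)" by (cases q) auto
  have cs: "cos t * cos t + sin t * sin t = 1" by (rule sin_cos_squared_add3)
  have 1: "(cos t * a - sin t * b)\<^sup>2 + (sin t * a + cos t * b)\<^sup>2 = a\<^sup>2 + b\<^sup>2"
    using cs by (rule rot_aux)
  have "(norm (rot t q))\<^sup>2 = (norm q)\<^sup>2"
    unfolding q rot_def fst_conv snd_conv norm3_sq using 1 by simp
  then show ?thesis by (simp add: power2_eq_iff_nonneg)
qed

lemma continuous_rot: "continuous_on S (rot t)"
  unfolding rot_def by (intro continuous_intros)

lemma rot_D0:
  assumes "q \<in> exteriorD (Sigma0 rho0 z0 muS muN)"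
  shows "rot t q \<in> exteriorD (Sigma0 rho0 z0 muS muN)"
proof -
  let ?S = "Sigma0 rho0 z0 muS muN"
  obtain C where C: "C \<in> components (- ?S)" "\<not> bounded C" "q \<in> C"
    using assms unfolding exteriorD_def by auto
  have Ceq: "C = connected_component_set (- ?S) q"
    using C by (metis components_iff connected_component_eq mem_Collect_eq)
  have sub: "rot t ` (- ?S) \<subseteq> - ?S"
  proof
    fix x assume "x \<in> rot t ` (- ?S)"
    then obtain w where w: "w \<notin> ?S" "x = rot t w" by auto
    show "x \<in> - ?S"
    proof
      assume "x \<in> ?S"
      then have "rot (-t) x \<in> ?S" using rot_Sig[of "-t"] by blast
      with w show False by (simp add: rot_rot)
    qed
  qed
  have qS: "q \<in> - ?S" using C in_components_subset by blast
  have "connected (rot t ` C)"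
    using C by (metis connected_continuous_image continuous_rot in_components_connected)
  moreover have "rot t ` C \<subseteq> - ?S" using sub C in_components_subset by blast
  moreover have "rot t q \<in> rot t ` C" using C by blast
  ultimately have sub2: "rot t ` C \<subseteq> connected_component_set (- ?S) (rot t q)"
    by (meson connected_component_maximal)
  have "\<not> bounded (rot t ` C)"
  proof
    assume "bounded (rot t ` C)"
    then obtain B where "\<forall>x\<in>rot t ` C. norm x \<le> B" by (meson bounded_iff)
    then have "\<forall>x\<in>C. norm x \<le> B" by (simp add: norm_rot)
    then show False using C(2) by (meson bounded_iff)
  qed
  then have "\<not> bounded (connected_component_set (- ?S) (rot t q))"
    using sub2 bounded_subset by blast
  moreover have "connected_component_set (- ?S) (rot t q) \<in> components (- ?S)"
    using sub qS by (intro componentsI) blast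
  moreover have "rot t q \<in> connected_component_set (- ?S) (rot t q)"
    using sub qS by (simp add: connected_component_refl_eq image_subset_iff)
  ultimately show ?thesis unfolding exteriorD_def by blast
qed


lemma line_deriv:
  fixes g :: "'a::real_normed_vector \<Rightarrow> real"
  assumes "g differentiable (at (a + s *\<^sub>R u))"
  shows "((\<lambda>s. g (a + s *\<^sub>R u)) has_derivative (\<lambda>d. d * frechet_derivative g (at (a + s *\<^sub>R u)) u)) (at s within T)"
proof -
  have 1: "((\<lambda>s. a + s *\<^sub>R u) has_derivative (\<lambda>d. d *\<^sub>R u)) (at s within T)"
    by (auto intro!: derivative_eq_intros)
  have 2: "(g has_derivative frechet_derivative g (at (a + s *\<^sub>R u))) (at (a + s *\<^sub>R u))"
    using assms frechet_derivative_works by blast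
  have lin: "linear (frechet_derivative g (at (a + s *\<^sub>R u)))"
    using 2 has_derivative_linear by blast
  have "((\<lambda>s. g (a + s *\<^sub>R u)) has_derivative (\<lambda>d. frechet_derivative g (at (a + s *\<^sub>R u)) (d *\<^sub>R u))) (at s within T)"
    using has_derivative_compose[OF 1 2] by (simp add: o_def)
  moreover have "(\<lambda>d. frechet_derivative g (at (a + s *\<^sub>R u)) (d *\<^sub>R u)) = (\<lambda>d. d * frechet_derivative g (at (a + s *\<^sub>R u)) u)"
    using lin by (simp add: linear_scale)
  ultimately show ?thesis by simp
qed

lemma schwarz_box:
  fixes g :: "'a::real_normed_vector \<Rightarrow> real"
  assumes h: "0 < h"
    and box: "\<And>s t. 0 \<le> s \<Longrightarrow> s \<le> h \<Longrightarrow> 0 \<le> t \<Longrightarrow> t \<le> h \<Longrightarrow> x + s *\<^sub>R u + t *\<^sub>R v \<in> A"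
    and dg: "\<And>y. y \<in> A \<Longrightarrow> g differentiable (at y)"
    and dgu: "\<And>y. y \<in> A \<Longrightarrow> (\<lambda>z. frechet_derivative g (at z) u) differentiable (at y)"
  shows "\<exists>s t. 0 \<le> s \<and> s \<le> h \<and> 0 \<le> t \<and> t \<le> h \<and>
     g (x + h *\<^sub>R u + h *\<^sub>R v) - g (x + h *\<^sub>R u) - g (x + h *\<^sub>R v) + g x
       = h * h * frechet_derivative (\<lambda>z. frechet_derivative g (at z) u) (at (x + s *\<^sub>R u + t *\<^sub>R v)) v"
proof -
  define Du where "Du z = frechet_derivative g (at z) u" for z
  define k where "k s = g ((x + h *\<^sub>R v) + s *\<^sub>R u) - g (x + s *\<^sub>R u)" for s
  have kd: "(k has_derivative (\<lambda>d. d * (Du ((x + h *\<^sub>R v) + s *\<^sub>R u) - Du (x + s *\<^sub>R u)))) (at s within {0..h})"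
    if s: "0 \<le> s" "s \<le> h" for s
  proof -
    have A1: "(x + h *\<^sub>R v) + s *\<^sub>R u \<in> A" using box[of s h] s h by (simp add: algebra_simps)
    have A2: "x + s *\<^sub>R u \<in> A" using box[of s 0] s h by simp
    show ?thesis
      unfolding k_def Du_def
      using has_derivative_diff[OF line_deriv[OF dg[OF A1]] line_deriv[OF dg[OF A2]]]
      by (simp add: algebra_simps)
  qed
  have "\<exists>s\<in>{0<..<h}. k h - k 0 = h * (Du ((x + h *\<^sub>R v) + s *\<^sub>R u) - Du (x + s *\<^sub>R u))"
    using mvt_simple[OF h, of k "\<lambda>s d. d * (Du ((x + h *\<^sub>R v) + s *\<^sub>R u) - Du (x + s *\<^sub>R u))"] kd
    by simp
  then obtain s where s: "0 < s" "s < h" and ks: "k h - k 0 = h * (Du ((x + h *\<^sub>R v) + s *\<^sub>R u) - Du (x + s *\<^sub>R u))"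
    by auto
  define m where "m t = Du ((x + s *\<^sub>R u) + t *\<^sub>R v)" for t
  have md: "(m has_derivative (\<lambda>d. d * frechet_derivative Du (at ((x + s *\<^sub>R u) + t *\<^sub>R v)) v)) (at t within {0..h})"
    if t: "0 \<le> t" "t \<le> h" for t
  proof -
    have A1: "(x + s *\<^sub>R u) + t *\<^sub>R v \<in> A" using box[of s t] s t by simp
    show ?thesis
      unfolding m_def
      by (rule line_deriv) (use dgu[OF A1] in \<open>simp add: Du_def\<close>)
  qed
  have "\<exists>t\<in>{0<..<h}. m h - m 0 = h * frechet_derivative Du (at ((x + s *\<^sub>R u) + t *\<^sub>R v)) v"
    using mvt_simple[OF h, of m "\<lambda>t d. d * frechet_derivative Du (at ((x + s *\<^sub>R u) + t *\<^sub>R v)) v"] md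
    by simp
  then obtain t where t: "0 < t" "t < h" and mt: "m h - m 0 = h * frechet_derivative Du (at ((x + s *\<^sub>R u) + t *\<^sub>R v)) v"
    by auto
  have "g (x + h *\<^sub>R u + h *\<^sub>R v) - g (x + h *\<^sub>R u) - g (x + h *\<^sub>R v) + g x = k h - k 0"
    unfolding k_def by (simp add: algebra_simps)
  also have "\<dots> = h * (m h - m 0)" unfolding ks m_def by (simp add: algebra_simps)
  also have "\<dots> = h * h * frechet_derivative Du (at (x + s *\<^sub>R u + t *\<^sub>R v)) v" unfolding mt by simp
  finally show ?thesis using s t unfolding Du_def
    by (intro exI[of _ s] exI[of _ t]) auto
qed

lemma abs_contra: "\<bar>A - a\<bar> < \<bar>a - b\<bar> / 2 \<Longrightarrow> \<bar>A - b\<bar> < \<bar>a - b\<bar> / 2 \<Longrightarrow> False" for A a b :: real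
  by (simp add: abs_if split: if_splits)

lemma schwarz:
  fixes g :: "'a::real_normed_vector \<Rightarrow> real"
  assumes A: "open A" "x \<in> A"
    and dg: "\<And>y. y \<in> A \<Longrightarrow> g differentiable (at y)"
    and dgu: "\<And>y. y \<in> A \<Longrightarrow> (\<lambda>z. frechet_derivative g (at z) u) differentiable (at y)"
    and dgv: "\<And>y. y \<in> A \<Longrightarrow> (\<lambda>z. frechet_derivative g (at z) v) differentiable (at y)"
    and cuv: "continuous (at x) (\<lambda>y. frechet_derivative (\<lambda>z. frechet_derivative g (at z) u) (at y) v)"
    and cvu: "continuous (at x) (\<lambda>y. frechet_derivative (\<lambda>z. frechet_derivative g (at z) v) (at y) u)"
  shows "frechet_derivative (\<lambda>z. frechet_derivative g (at z) u) (at x) v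
       = frechet_derivative (\<lambda>z. frechet_derivative g (at z) v) (at x) u"
proof (rule ccontr)
  define Fuv where "Fuv y = frechet_derivative (\<lambda>z. frechet_derivative g (at z) u) (at y) v" for y
  define Fvu where "Fvu y = frechet_derivative (\<lambda>z. frechet_derivative g (at z) v) (at y) u" for y
  assume ne: "\<not> ?thesis"
  define e where "e = \<bar>Fuv x - Fvu x\<bar> / 2"
  have e: "e > 0" using ne unfolding e_def Fuv_def Fvu_def by simp
  obtain d1 where d1: "d1 > 0" "\<And>y. dist y x < d1 \<Longrightarrow> dist (Fuv y) (Fuv x) < e"
    using cuv e unfolding continuous_at_eps_delta Fuv_def by blast
  obtain d2 where d2: "d2 > 0" "\<And>y. dist y x < d2 \<Longrightarrow> dist (Fvu y) (Fvu x) < e"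
    using cvu e unfolding continuous_at_eps_delta Fvu_def by blast
  obtain r where r: "r > 0" "ball x r \<subseteq> A" using A open_contains_ball by blast
  define dd where "dd = min r (min d1 d2)"
  have dd: "dd > 0" using r d1 d2 unfolding dd_def by simp
  define h where "h = dd / (2 * (norm u + norm v + 1))"
  have pos: "2 * (norm u + norm v + 1) > 0" by (smt (verit) norm_ge_zero)
  have h: "h > 0" using dd pos unfolding h_def by (rule divide_pos_pos)
  have close: "dist (x + s *\<^sub>R u + t *\<^sub>R v) x < dd" if "0 \<le> s" "s \<le> h" "0 \<le> t" "t \<le> h" for s t
  proof -
    have "dist (x + s *\<^sub>R u + t *\<^sub>R v) x = norm (s *\<^sub>R u + t *\<^sub>R v)" by (simp add: dist_norm)
    also have "\<dots> \<le> s * norm u + t * norm v" using that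
      by (metis abs_of_nonneg norm_scaleR norm_triangle_ineq)
    also have "\<dots> \<le> h * norm u + h * norm v" using that
      by (intro add_mono mult_right_mono) auto
    also have "\<dots> < h * (2 * (norm u + norm v + 1))"
    proof -
      have "0 \<le> h * norm u" "0 \<le> h * norm v" using h by auto
      moreover have "h * (2 * (norm u + norm v + 1)) = 2 * (h * norm u) + 2 * (h * norm v) + 2 * h"
        by (simp add: algebra_simps)
      ultimately show ?thesis using h by linarith
    qed
    also have "\<dots> = dd" unfolding h_def using pos by simp
    finally show ?thesis .
  qed
  have box: "x + s *\<^sub>R u + t *\<^sub>R v \<in> A" if "0 \<le> s" "s \<le> h" "0 \<le> t" "t \<le> h" for s t
    using close[OF that] r unfolding dd_def by (auto simp: dist_commute subset_iff)
  have box': "x + s *\<^sub>R v + t *\<^sub>R u \<in> A" if "0 \<le> s" "s \<le> h" "0 \<le> t" "t \<le> h" for s t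
    using box[of t s] that by (simp add: algebra_simps)
  obtain s t where st: "0 \<le> s" "s \<le> h" "0 \<le> t" "t \<le> h" and
    eq1: "g (x + h *\<^sub>R u + h *\<^sub>R v) - g (x + h *\<^sub>R u) - g (x + h *\<^sub>R v) + g x = h * h * Fuv (x + s *\<^sub>R u + t *\<^sub>R v)"
    using schwarz_box[OF h box dg dgu] unfolding Fuv_def by blast
  obtain s' t' where st': "0 \<le> s'" "s' \<le> h" "0 \<le> t'" "t' \<le> h" and
    eq2: "g (x + h *\<^sub>R v + h *\<^sub>R u) - g (x + h *\<^sub>R v) - g (x + h *\<^sub>R u) + g x = h * h * Fvu (x + s' *\<^sub>R v + t' *\<^sub>R u)"
    using schwarz_box[OF h box' dg dgv] unfolding Fvu_def by blast
  have "h * h * Fuv (x + s *\<^sub>R u + t *\<^sub>R v) = h * h * Fvu (x + s' *\<^sub>R v + t' *\<^sub>R u)"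
    using eq1 eq2 by (simp add: algebra_simps)
  then have eqF: "Fuv (x + s *\<^sub>R u + t *\<^sub>R v) = Fvu (x + s' *\<^sub>R v + t' *\<^sub>R u)" using h by simp
  have "dist (x + s *\<^sub>R u + t *\<^sub>R v) x < d1" using close[OF st] unfolding dd_def by simp
  then have a1: "\<bar>Fuv (x + s *\<^sub>R u + t *\<^sub>R v) - Fuv x\<bar> < e" using d1 by (simp add: dist_real_def)
  have "dist (x + t' *\<^sub>R u + s' *\<^sub>R v) x < d2" using close[of t' s'] st' unfolding dd_def by simp
  then have a2: "\<bar>Fvu (x + s' *\<^sub>R v + t' *\<^sub>R u) - Fvu x\<bar> < e" using d2 by (simp add: dist_real_def algebra_simps)
  show False using abs_contra[of "Fuv (x + s *\<^sub>R u + t *\<^sub>R v)" "Fuv x" "Fvu x"] a1 a2 eqF unfolding e_def by simp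
qed


lemma Basis3: "(Basis :: R3 set) = {(1,0,0), (0,1,0), (0,0,1)}"
  by (auto simp: Basis_prod_def zero_prod_def)

lemma sum_Basis3: "(\<Sum>i\<in>(Basis :: R3 set). f i) = f (1,0,0) + f (0,1,0) + f (0,0,1)"
  unfolding Basis3 by (simp add: add.assoc)

lemma cylRho_pos: "cylRho q \<noteq> 0 \<Longrightarrow> cylRho q > 0"
  unfolding cylRho_def by (simp add: less_le)

lemma cylRho_sq: "cylRho q * cylRho q = (fst q)\<^sup>2 + (fst (snd q))\<^sup>2"
  unfolding cylRho_def by simp

lemma cylRho_deriv:
  assumes "cylRho q \<noteq> 0"
  shows "(cylRho has_derivative (\<lambda>h. (fst q * fst h + fst (snd q) * fst (snd h)) / cylRho q)) (at q)"
proof -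
  have pos: "(fst q)\<^sup>2 + (fst (snd q))\<^sup>2 > 0" using assms unfolding cylRho_def
    by (metis add_nonneg_nonneg less_eq_real_def real_sqrt_zero zero_le_power2)
  have "((\<lambda>y. sqrt ((fst y)\<^sup>2 + (fst (snd y))\<^sup>2)) has_derivative
     (\<lambda>h::R3. (2 * fst q * fst h + 2 * fst (snd q) * fst (snd h)) / (2 * sqrt ((fst q)\<^sup>2 + (fst (snd q))\<^sup>2)))) (at q)"
    using pos by (auto intro!: derivative_eq_intros ext simp: field_simps)
  moreover have "(\<lambda>h::R3. (2 * fst q * fst h + 2 * fst (snd q) * fst (snd h)) / (2 * sqrt ((fst q)\<^sup>2 + (fst (snd q))\<^sup>2)))
     = (\<lambda>h. (fst q * fst h + fst (snd q) * fst (snd h)) / cylRho q)"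
  proof -
    have e: "2 * fst q * fst h + 2 * fst (snd q) * fst (snd h) = 2 * (fst q * fst h + fst (snd q) * fst (snd h))" for h :: R3
      by (simp add: algebra_simps)
    show ?thesis unfolding cylRho_def by (intro ext) (subst e, rule mult_divide_mult_cancel_left, simp)
  qed
  ultimately show ?thesis unfolding cylRho_def[abs_def] by simp
qed

lemma proj_deriv:
  assumes "cylRho q \<noteq> 0"
  shows "(proj has_derivative (\<lambda>h. ((fst q * fst h + fst (snd q) * fst (snd h)) / cylRho q, snd (snd h)))) (at q)"
  unfolding proj_def[abs_def]
  by (intro has_derivative_Pair cylRho_deriv[OF assms] derivative_intros)

lemma lift_deriv:
  assumes f: "(f has_derivative (\<lambda>h. fst h * fr + snd h * fz)) (at (proj q))"
    and q: "cylRho q \<noteq> 0"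
  shows "((\<lambda>y. f (proj y)) has_derivative
           (\<lambda>h. fr * ((fst q * fst h + fst (snd q) * fst (snd h)) / cylRho q) + fz * snd (snd h))) (at q)"
  using has_derivative_compose[OF proj_deriv[OF q] f] by (simp add: o_def mult.commute)

lemma gammaProd_lift:
  assumes f: "(f has_derivative (\<lambda>h. fst h * fr + snd h * fz)) (at (proj q))"
    and q: "cylRho q \<noteq> 0"
  shows "gammaProd (lift f) (lift f) q = fr\<^sup>2 + fz\<^sup>2"
proof -
  have d: "pd3 i (lift f) q = fr * ((fst q * fst i + fst (snd q) * fst (snd i)) / cylRho q) + fz * snd (snd i)" for i
    unfolding pd3_def lift_def[abs_def]
    using frechet_derivative_at[OF lift_deriv[OF f q], symmetric] by simp
  have r: "cylRho q * cylRho q = (fst q)\<^sup>2 + (fst (snd q))\<^sup>2" by (rule cylRho_sq)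
  have "gammaProd (lift f) (lift f) q = fr\<^sup>2 * (((fst q)\<^sup>2 + (fst (snd q))\<^sup>2) / (cylRho q * cylRho q)) + fz\<^sup>2"
    unfolding gammaProd_def sum_Basis3 d using q by (simp add: field_simps power2_eq_square)
  also have "\<dots> = fr\<^sup>2 + fz\<^sup>2" using q by (simp add: r[symmetric])
  finally show ?thesis .
qed

lemma div3_lift:
  assumes a: "(a has_derivative (\<lambda>h. fst h * aR + snd h * aZ)) (at (proj q))"
    and b: "(b has_derivative (\<lambda>h. fst h * bR + snd h * bZ)) (at (proj q))"
    and q: "cylRho q \<noteq> 0"
  shows "div3 (\<lambda>y. (a (proj y) * fst y / cylRho y, a (proj y) * fst (snd y) / cylRho y, b (proj y))) q
     = aR + a (proj q) / cylRho q + bZ"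
proof -
  let ?r = "cylRho q"
  define rr where "rr h = (fst q * fst h + fst (snd q) * fst (snd h)) / ?r" for h :: R3
  define aa where "aa h = aR * rr h + aZ * snd (snd h)" for h :: R3
  define bb where "bb h = bR * rr h + bZ * snd (snd h)" for h :: R3
  have rho: "(cylRho has_derivative rr) (at q)"
    using cylRho_deriv[OF q] unfolding rr_def[abs_def] .
  have A: "((\<lambda>y. a (proj y)) has_derivative aa) (at q)"
    using lift_deriv[OF a q] unfolding aa_def[abs_def] rr_def .
  have B: "((\<lambda>y. b (proj y)) has_derivative bb) (at q)"
    using lift_deriv[OF b q] unfolding bb_def[abs_def] rr_def .
  have D: "((\<lambda>y. (a (proj y) * fst y / cylRho y, a (proj y) * fst (snd y) / cylRho y, b (proj y))) has_derivative
     (\<lambda>h. (((aa h * fst q + a (proj q) * fst h) * ?r - a (proj q) * fst q * rr h) / (?r * ?r),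
           ((aa h * fst (snd q) + a (proj q) * fst (snd h)) * ?r - a (proj q) * fst (snd q) * rr h) / (?r * ?r),
           bb h))) (at q)"
    using q by (auto intro!: derivative_eq_intros A B rho ext simp: algebra_simps)
  have r: "?r * ?r = (fst q)\<^sup>2 + (fst (snd q))\<^sup>2" by (rule cylRho_sq)
  have rp: "?r > 0" using cylRho_pos[OF q] .
  show ?thesis
    unfolding div3_def sum_Basis3 frechet_derivative_at[OF D, symmetric]
    using rp apply (simp add: aa_def bb_def rr_def field_simps)
    using r unfolding power2_eq_square by algebra
qed


lemma lin2: "linear L \<Longrightarrow> L h = fst h * L (1,0) + snd h * (L (0,1) :: real)"
proof -
  assume l: "linear L"
  have "h = fst h *\<^sub>R (1::real,0::real) + snd h *\<^sub>R (0,1)" by (cases h) simp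
  then have "L h = L (fst h *\<^sub>R (1,0) + snd h *\<^sub>R (0,1))" by simp
  also have "\<dots> = fst h * L (1,0) + snd h * L (0,1)"
    by (simp only: linear_add[OF l] linear_scale[OF l] real_scaleR_def)
  finally show ?thesis .
qed

lemma hd2:
  fixes f :: "real \<times> real \<Rightarrow> real"
  assumes "(f has_derivative f') F"
  shows "(f has_derivative (\<lambda>h. fst h * f' (1,0) + snd h * f' (0,1))) F"
proof -
  have "linear f'" using assms has_derivative_linear by blast
  then have "f' = (\<lambda>h. fst h * f' (1,0) + snd h * f' (0,1))" by (intro ext lin2)
  then show ?thesis using assms by simp
qed

lemma dK_has:
  assumes "at p within K = at p" "f differentiable (at p within K)"
  shows "(f has_derivative (\<lambda>h. fst h * fst (dK K f p) + snd h * snd (dK K f p))) (at p)"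
proof -
  have "(f has_derivative frechet_derivative f (at p)) (at p)"
    using assms frechet_derivative_works by metis
  from hd2[OF this] show ?thesis using assms(1) by (simp add: dK_def)
qed

lemma dK_eq:
  assumes "at p within K = at p" "(f has_derivative (\<lambda>h. fst h * a + snd h * b)) (at p)"
  shows "dK K f p = (a, b)"
  using frechet_derivative_at[OF assms(2), symmetric] assms(1) by (simp add: dK_def)

lemma pd3_fun: "pd3 i g = (\<lambda>q. frechet_derivative g (at q) i)"
  by (rule ext) (simp add: pd3_def)

lemma emb_deriv:
  fixes f :: "R3 \<Rightarrow> real"
  assumes "f differentiable (at (fst p, 0, snd p))"
  shows "((\<lambda>p. f (fst p, 0, snd p)) has_derivative
     (\<lambda>h. fst h * pd3 (1,0,0) f (fst p, 0, snd p) + snd h * pd3 (0,0,1) f (fst p, 0, snd p))) (at p)"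
proof -
  let ?x = "(fst p, 0::real, snd p)"
  have e: "((\<lambda>p::real\<times>real. (fst p, 0::real, snd p)) has_derivative (\<lambda>h. (fst h, 0, snd h))) (at p)"
    by (auto intro!: derivative_eq_intros)
  have g: "(f has_derivative frechet_derivative f (at ?x)) (at ?x)"
    using assms frechet_derivative_works by blast
  have lin: "linear (frechet_derivative f (at ?x))" using g has_derivative_linear by blast
  have c: "((\<lambda>p. f (fst p, 0, snd p)) has_derivative (\<lambda>h. frechet_derivative f (at ?x) (fst h, 0, snd h))) (at p)"
    using has_derivative_compose[OF e g] by (simp add: o_def)
  have "frechet_derivative f (at ?x) (fst h, 0, snd h) =
      fst h * frechet_derivative f (at ?x) (1,0,0) + snd h * frechet_derivative f (at ?x) (0,0,1)" for h :: "real \<times> real"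
  proof -
    have "frechet_derivative f (at ?x) (fst h, 0, snd h) = frechet_derivative f (at ?x) (fst h *\<^sub>R (1::real, 0::real, 0::real) + snd h *\<^sub>R (0, 0, 1))"
      by simp
    also have "\<dots> = fst h * frechet_derivative f (at ?x) (1,0,0) + snd h * frechet_derivative f (at ?x) (0,0,1)"
      by (simp only: linear_add[OF lin] linear_scale[OF lin] real_scaleR_def)
    finally show ?thesis .
  qed
  then show ?thesis using c by (simp add: pd3_def)
qed


lemma S_second:
  fixes S :: "real \<times> real \<Rightarrow> real" and K Kp :: "(real \<times> real) set" and A3 :: "R3 set"
  assumes Kp: "open Kp"
    and Kp_prop: "\<And>p. p \<in> Kp \<Longrightarrow> 0 < fst p \<and> at p within K = at p \<and> (fst p, 0, snd p) \<in> A3"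
    and A3: "open A3" and C2: "C2_on3 A3 (lift S)" and p: "p \<in> Kp"
  shows "\<exists>a b c. ((\<lambda>p. fst (dK K S p)) has_derivative (\<lambda>h. fst h * a + snd h * b)) (at p)
              \<and> ((\<lambda>p. snd (dK K S p)) has_derivative (\<lambda>h. fst h * b + snd h * c)) (at p)"
proof -
  let ?g = "lift S"
  define e1 :: R3 where "e1 = (1,0,0)"
  define e3 :: R3 where "e3 = (0,0,1)"
  have B: "e1 \<in> Basis" "e3 \<in> Basis" unfolding e1_def e3_def Basis3 by auto
  have C2': "C1_on3 A3 ?g" "C1_on3 A3 (pd3 e1 ?g)" "C1_on3 A3 (pd3 e3 ?g)"
    using C2 B unfolding C2_on3_def by auto
  have dg: "\<And>y. y \<in> A3 \<Longrightarrow> ?g differentiable (at y)" using C2' unfolding C1_on3_def by auto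
  have dg1: "\<And>y. y \<in> A3 \<Longrightarrow> pd3 e1 ?g differentiable (at y)" using C2' unfolding C1_on3_def by auto
  have dg3: "\<And>y. y \<in> A3 \<Longrightarrow> pd3 e3 ?g differentiable (at y)" using C2' unfolding C1_on3_def by auto
  have Seq: "S p' = ?g (fst p', 0, snd p')" if "p' \<in> Kp" for p'
  proof -
    have "0 < fst p'" using Kp_prop that by blast
    then show ?thesis by (simp add: lift_def proj_def cylRho_def)
  qed
  have dKS: "dK K S p' = (pd3 e1 ?g (fst p', 0, snd p'), pd3 e3 ?g (fst p', 0, snd p'))" if p': "p' \<in> Kp" for p'
  proof -
    have "((\<lambda>p. ?g (fst p, 0, snd p)) has_derivative
        (\<lambda>h. fst h * pd3 (1,0,0) ?g (fst p', 0, snd p') + snd h * pd3 (0,0,1) ?g (fst p', 0, snd p'))) (at p')"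
      by (rule emb_deriv) (use dg Kp_prop p' in auto)
    then have "(S has_derivative
        (\<lambda>h. fst h * pd3 (1,0,0) ?g (fst p', 0, snd p') + snd h * pd3 (0,0,1) ?g (fst p', 0, snd p'))) (at p')"
      by (rule has_derivative_transform_within_open[OF _ Kp p']) (use Seq in auto)
    then show ?thesis using dK_eq Kp_prop p' unfolding e1_def e3_def by blast
  qed
  let ?x = "(fst p, 0::real, snd p)"
  have xA: "?x \<in> A3" using Kp_prop p by blast
  have D1: "((\<lambda>p. fst (dK K S p)) has_derivative
      (\<lambda>h. fst h * pd3 (1,0,0) (pd3 e1 ?g) ?x + snd h * pd3 (0,0,1) (pd3 e1 ?g) ?x)) (at p)"
  proof -
    have "((\<lambda>p. pd3 e1 ?g (fst p, 0, snd p)) has_derivative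
      (\<lambda>h. fst h * pd3 (1,0,0) (pd3 e1 ?g) ?x + snd h * pd3 (0,0,1) (pd3 e1 ?g) ?x)) (at p)"
      by (rule emb_deriv) (use dg1 xA in auto)
    then show ?thesis
      by (rule has_derivative_transform_within_open[OF _ Kp p]) (use dKS in auto)
  qed
  have D3: "((\<lambda>p. snd (dK K S p)) has_derivative
      (\<lambda>h. fst h * pd3 (1,0,0) (pd3 e3 ?g) ?x + snd h * pd3 (0,0,1) (pd3 e3 ?g) ?x)) (at p)"
  proof -
    have "((\<lambda>p. pd3 e3 ?g (fst p, 0, snd p)) has_derivative
      (\<lambda>h. fst h * pd3 (1,0,0) (pd3 e3 ?g) ?x + snd h * pd3 (0,0,1) (pd3 e3 ?g) ?x)) (at p)"
      by (rule emb_deriv) (use dg3 xA in auto)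
    then show ?thesis
      by (rule has_derivative_transform_within_open[OF _ Kp p]) (use dKS in auto)
  qed
  have dg1': "\<And>y. y \<in> A3 \<Longrightarrow> (\<lambda>z. frechet_derivative ?g (at z) e1) differentiable (at y)"
    using dg1 by (simp add: pd3_fun)
  have dg3': "\<And>y. y \<in> A3 \<Longrightarrow> (\<lambda>z. frechet_derivative ?g (at z) e3) differentiable (at y)"
    using dg3 by (simp add: pd3_fun)
  have c13: "continuous (at ?x) (pd3 e3 (pd3 e1 ?g))"
    using C2' B xA A3 unfolding C1_on3_def by (metis continuous_on_eq_continuous_at)
  have c31: "continuous (at ?x) (pd3 e1 (pd3 e3 ?g))"
    using C2' B xA A3 unfolding C1_on3_def by (metis continuous_on_eq_continuous_at)
  have c13': "continuous (at ?x) (\<lambda>y. frechet_derivative (\<lambda>z. frechet_derivative ?g (at z) e1) (at y) e3)"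
    using c13 by (simp add: pd3_fun)
  have c31': "continuous (at ?x) (\<lambda>y. frechet_derivative (\<lambda>z. frechet_derivative ?g (at z) e3) (at y) e1)"
    using c31 by (simp add: pd3_fun)
  have "frechet_derivative (\<lambda>z. frechet_derivative ?g (at z) e1) (at ?x) e3
      = frechet_derivative (\<lambda>z. frechet_derivative ?g (at z) e3) (at ?x) e1"
    by (rule schwarz[OF A3 xA dg dg1' dg3' c13' c31'])
  then have sym: "pd3 (0,0,1) (pd3 e1 ?g) ?x = pd3 (1,0,0) (pd3 e3 ?g) ?x"
    unfolding e1_def e3_def by (simp add: pd3_fun)
  show ?thesis using D1 D3[unfolded sym[symmetric]] by blast
qed

lemma wedge_alg:
  "wedgeK (E1 *\<^sub>R (- (1 + c) *\<^sub>R w - s *\<^sub>R hodgeK w)) (E2 *\<^sub>R ((1 - c) *\<^sub>R w - s *\<^sub>R hodgeK w))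
     = 2 * s * (E1 * E2) * wedgeK w (hodgeK w)"
  by (cases w) (simp add: wedgeK_def hodgeK_def algebra_simps)


lemma transf:
  assumes "(f has_derivative f') (at x)" "open s" "x \<in> s" "\<forall>y\<in>s. f y = g y"
  shows "(g has_derivative f') (at x)"
  using has_derivative_transform_within_open[OF assms(1-3)] assms(4) by blast

theorem mainTheorem6:
  fixes rho0 z0 :: "real \<Rightarrow> real" and muS muN y :: real
    and U0 Om Z S1 S2 :: "real \<times> real \<Rightarrow> real"
  defines "Sig \<equiv> Sigma0 rho0 z0 muS muN"
  defines "D0 \<equiv> exteriorD Sig"
  defines "K \<equiv> KE D0"
  defines "T1 \<equiv> (\<lambda>p. (1 / (2 * fst p)) *\<^sub>R (S1 p *\<^sub>R hodgeK (dK K S2 p)))"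
  assumes surf_C1: "(\<lambda>mu. (rho0 mu, z0 mu)) C1_differentiable_on {muS..muN}"
    and surf_sphere: "Sig homeomorphic sphere (0::R3) 1"
    and mu_lt: "muS < muN"
    and rho0_ends: "rho0 muS = 0" "rho0 muN = 0"
    and rho0_pos: "\<forall>mu. muS < mu \<and> mu < muN \<longrightarrow> rho0 mu > 0"
    and zS_lt_zN: "z0 muS < z0 muN"
    and y_range: "z0 muS < y" "y < z0 muN"
    and U0_reg: "regular3 D0 Sig (lift U0)"
    and U0_harm: "\<forall>q\<in>D0. lap3 (lift U0) q = 0"
    and Om_reg: "regular3 D0 Sig (lift Om)"
    and Om_eq: "\<forall>q\<in>D0. lap3 (lift Om) q - 4 * gammaProd (lift Om) (lift U0) q = 0"
    and U0_diffK: "\<forall>p\<in>K. U0 differentiable (at p within K)"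
    and Om_diffK: "\<forall>p\<in>K. Om differentiable (at p within K)"
    and Z_eq: "\<forall>p\<in>K. Z differentiable (at p within K) \<and>
                 dK K Z p = cosUps y p *\<^sub>R dK K U0 p + sinUps y p *\<^sub>R hodgeK (dK K U0 p)"
    and Z_inf: "(Z \<longlongrightarrow> 0) (inf at_infinity (principal K))"
    and S1_eq: "\<forall>p\<in>K. S1 differentiable (at p within K) \<and>
                 dK K S1 p = exp (- 2 * U0 p + 2 * Z p) *\<^sub>R
                   (- (1 + cosUps y p) *\<^sub>R dK K Om p - sinUps y p *\<^sub>R hodgeK (dK K Om p))"
    and S1_inf: "(S1 \<longlongrightarrow> 0) (inf at_infinity (principal K))"
    and S2_eq: "\<forall>p\<in>K. S2 differentiable (at p within K) \<and>
                 dK K S2 p = exp (- 2 * U0 p - 2 * Z p) *\<^sub>R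
                   ((1 - cosUps y p) *\<^sub>R dK K Om p - sinUps y p *\<^sub>R hodgeK (dK K Om p))"
    and S2_inf: "(S2 \<longlongrightarrow> 0) (inf at_infinity (principal K))"
    and S_C2: "C2_on3 (D0 \<inter> {q. cylRho q \<noteq> 0}) (lift S1)"
              "C2_on3 (D0 \<inter> {q. cylRho q \<noteq> 0}) (lift S2)"
  shows "(\<forall>p\<in>K. wedgeK (dK K S1 p) (dK K S2 p)
            = 2 * sinUps y p * exp (- 4 * U0 p) * wedgeK (dK K Om p) (hodgeK (dK K Om p)))
       \<and> (\<forall>p\<in>K. 0 < fst p \<longrightarrow>
            d1K K (\<lambda>q. fst q *\<^sub>R hodgeK (T1 q)) p
              + sinUps y p * exp (- 4 * U0 p) * wedgeK (dK K Om p) (hodgeK (dK K Om p)) = 0)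
       \<and> (\<forall>q\<in>D0. cylRho q \<noteq> 0 \<longrightarrow>
            div3 (liftVec T1) q
              = - lift (psiY y) q * exp (- 4 * lift U0 q) * gammaProd (lift Om) (lift Om) q)"
proof -
  have Sigc: "compact Sig" using surf_sphere homeomorphic_compactness compact_sphere by blast
  have openD0: "open D0" unfolding D0_def exteriorD_def
  proof (intro open_Union ballI)
    fix C assume "C \<in> {C \<in> components (- Sig). \<not> bounded C}"
    moreover have "open (- Sig)" using compact_imp_closed[OF Sigc] by (simp add: open_Compl)
    ultimately show "open C" using open_components by blast
  qed
  define A3 where "A3 = D0 \<inter> {q. cylRho q \<noteq> 0}"
  have contrho: "continuous_on UNIV cylRho" unfolding cylRho_def[abs_def] by (intro continuous_intros)
  have openA3: "open A3" unfolding A3_def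
    by (intro open_Int openD0 open_Collect_neq contrho continuous_on_const)
  define Kp where "Kp = {p. 0 < fst p \<and> (fst p, 0::real, snd p) \<in> D0}"
  have Kp_eq: "Kp = {p. 0 < fst p} \<inter> (\<lambda>p. (fst p, 0::real, snd p)) -` D0" unfolding Kp_def by auto
  have openKp: "open Kp" unfolding Kp_eq
    by (intro open_Int open_Collect_less continuous_open_vimage openD0) (auto intro!: continuous_intros)
  have KpK: "Kp \<subseteq> K" unfolding Kp_def K_def KE_def by auto
  have atK: "at p within K = at p" if "p \<in> Kp" for p
    using interior_maximal[OF KpK openKp] at_within_interior that by blast
  have Kp_prop: "0 < fst p \<and> at p within K = at p \<and> (fst p, 0, snd p) \<in> A3" if "p \<in> Kp" for p
    using that atK unfolding Kp_def A3_def by (auto simp: cylRho_def)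
  have S2sec: "\<exists>a b c. ((\<lambda>p. fst (dK K S2 p)) has_derivative (\<lambda>h. fst h * a + snd h * b)) (at p)
              \<and> ((\<lambda>p. snd (dK K S2 p)) has_derivative (\<lambda>h. fst h * b + snd h * c)) (at p)" if "p \<in> Kp" for p
    by (rule S_second[OF openKp Kp_prop openA3 _ that]) (use S_C2(2) A3_def in auto)
  have P1: "wedgeK (dK K S1 p) (dK K S2 p)
            = 2 * sinUps y p * exp (- 4 * U0 p) * wedgeK (dK K Om p) (hodgeK (dK K Om p))" if "p \<in> K" for p
  proof -
    have e: "exp (- 2 * U0 p + 2 * Z p) * exp (- 2 * U0 p - 2 * Z p) = exp (- 4 * U0 p)"
      by (simp add: exp_add[symmetric])
    have s1: "dK K S1 p = exp (- 2 * U0 p + 2 * Z p) *\<^sub>R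
                   (- (1 + cosUps y p) *\<^sub>R dK K Om p - sinUps y p *\<^sub>R hodgeK (dK K Om p))"
      using S1_eq that by blast
    have s2: "dK K S2 p = exp (- 2 * U0 p - 2 * Z p) *\<^sub>R
                   ((1 - cosUps y p) *\<^sub>R dK K Om p - sinUps y p *\<^sub>R hodgeK (dK K Om p))"
      using S2_eq that by blast
    show ?thesis unfolding s1 s2 wedge_alg e by (rule refl)
  qed
  have S1d: "(S1 has_derivative (\<lambda>h. fst h * fst (dK K S1 p) + snd h * snd (dK K S1 p))) (at p)"
    if "p \<in> Kp" for p
    by (rule dK_has[OF atK[OF that]]) (use S1_eq KpK that in auto)
  have P2: "d1K K (\<lambda>q. fst q *\<^sub>R hodgeK (T1 q)) p
              + sinUps y p * exp (- 4 * U0 p) * wedgeK (dK K Om p) (hodgeK (dK K Om p)) = 0"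
    if pK: "p \<in> K" and pp: "0 < fst p" for p
  proof -
    have pKp: "p \<in> Kp" using pK pp unfolding K_def KE_def Kp_def by auto
    obtain a b c where D1: "((\<lambda>p. fst (dK K S2 p)) has_derivative (\<lambda>h. fst h * a + snd h * b)) (at p)"
      and D2: "((\<lambda>p. snd (dK K S2 p)) has_derivative (\<lambda>h. fst h * b + snd h * c)) (at p)"
      using S2sec[OF pKp] by blast
    have eqP: "fst q *\<^sub>R hodgeK (T1 q) = (- (1/2) * (S1 q * fst (dK K S2 q)), - (1/2) * (S1 q * snd (dK K S2 q)))"
      if "q \<in> Kp" for q
    proof -
      have "fst q > 0" using that unfolding Kp_def by auto
      then show ?thesis unfolding T1_def hodgeK_def by (simp add: field_simps)
    qed
    have F2: "((\<lambda>q. snd (fst q *\<^sub>R hodgeK (T1 q))) has_derivative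
       (\<lambda>h. - (1/2) * (S1 p * (fst h * b + snd h * c) + (fst h * fst (dK K S1 p) + snd h * snd (dK K S1 p)) * snd (dK K S2 p)))) (at p)"
    proof -
      have "((\<lambda>q. - (1/2) * (S1 q * snd (dK K S2 q))) has_derivative
       (\<lambda>h. - (1/2) * (S1 p * (fst h * b + snd h * c) + (fst h * fst (dK K S1 p) + snd h * snd (dK K S1 p)) * snd (dK K S2 p)))) (at p)"
        using has_derivative_mult_right[where x="- (1/2)", OF has_derivative_mult[OF S1d[OF pKp] D2]] by simp
      then show ?thesis
        by (rule has_derivative_transform_within_open[OF _ openKp pKp]) (use eqP in auto)
    qed
    have F1: "((\<lambda>q. fst (fst q *\<^sub>R hodgeK (T1 q))) has_derivative
       (\<lambda>h. - (1/2) * (S1 p * (fst h * a + snd h * b) + (fst h * fst (dK K S1 p) + snd h * snd (dK K S1 p)) * fst (dK K S2 p)))) (at p)"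
    proof -
      have "((\<lambda>q. - (1/2) * (S1 q * fst (dK K S2 q))) has_derivative
       (\<lambda>h. - (1/2) * (S1 p * (fst h * a + snd h * b) + (fst h * fst (dK K S1 p) + snd h * snd (dK K S1 p)) * fst (dK K S2 p)))) (at p)"
        using has_derivative_mult_right[where x="- (1/2)", OF has_derivative_mult[OF S1d[OF pKp] D1]] by simp
      then show ?thesis
        by (rule has_derivative_transform_within_open[OF _ openKp pKp]) (use eqP in auto)
    qed
    have "d1K K (\<lambda>q. fst q *\<^sub>R hodgeK (T1 q)) p = - (1/2) * wedgeK (dK K S1 p) (dK K S2 p)"
      unfolding d1K_def atK[OF pKp] frechet_derivative_at[OF F2, symmetric] frechet_derivative_at[OF F1, symmetric]
      by (simp add: wedgeK_def algebra_simps)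
    then show ?thesis using P1[OF pK] by simp
  qed
  have P3: "div3 (liftVec T1) q
              = - lift (psiY y) q * exp (- 4 * lift U0 q) * gammaProd (lift Om) (lift Om) q"
    if qD: "q \<in> D0" and q0: "cylRho q \<noteq> 0" for q
  proof -
    define r where "r = cylRho q"
    have rp: "r > 0" using cylRho_pos[OF q0] unfolding r_def .
    have rsq: "r * r = (fst q)\<^sup>2 + (fst (snd q))\<^sup>2" unfolding r_def by (rule cylRho_sq)
    have "(fst q / r)\<^sup>2 + (- fst (snd q) / r)\<^sup>2 = ((fst q)\<^sup>2 + (fst (snd q))\<^sup>2) / (r * r)"
      by (simp add: power_divide power2_eq_square add_divide_distrib)
    also have "\<dots> = 1" using rp by (simp add: rsq[symmetric])
    finally have "(fst q / r)\<^sup>2 + (- fst (snd q) / r)\<^sup>2 = 1" .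
    then obtain t where t: "fst q / r = cos t" "- fst (snd q) / r = sin t"
      using sincos_total_2pi by metis
    have "rot t q = (r, 0, snd (snd q))"
    proof -
      have "cos t * fst q - sin t * fst (snd q) = r"
        unfolding t[symmetric] using rp rsq by (simp add: field_simps power2_eq_square)
      moreover have "sin t * fst q + cos t * fst (snd q) = 0"
        unfolding t[symmetric] using rp by (simp add: field_simps)
      ultimately show ?thesis unfolding rot_def by simp
    qed
    moreover have "rot t q \<in> D0" using rot_D0 qD unfolding D0_def Sig_def by blast
    ultimately have "(r, 0, snd (snd q)) \<in> D0" by simp
    then have pKp: "proj q \<in> Kp" unfolding Kp_def proj_def r_def using rp r_def by simp
    have fstP: "fst (proj q) = r" unfolding proj_def r_def by simp
    obtain a b c where D1: "((\<lambda>p. fst (dK K S2 p)) has_derivative (\<lambda>h. fst h * a + snd h * b)) (at (proj q))"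
      and D2: "((\<lambda>p. snd (dK K S2 p)) has_derivative (\<lambda>h. fst h * b + snd h * c)) (at (proj q))"
      using S2sec[OF pKp] by blast
    define fa where "fa p = fst (T1 p)" for p
    define fb where "fb p = snd (T1 p)" for p
    have fa_eq: "fa p' = S1 p' * snd (dK K S2 p') / (2 * fst p')" if "p' \<in> Kp" for p'
      unfolding fa_def T1_def hodgeK_def by simp
    have fb_eq: "fb p' = - (S1 p' * fst (dK K S2 p')) / (2 * fst p')" if "p' \<in> Kp" for p'
      unfolding fb_def T1_def hodgeK_def by simp
    note S1P = S1d[OF pKp]
    have den: "((\<lambda>p. 2 * fst p) has_derivative (\<lambda>h. 2 * fst h)) (at (proj q))"
      by (auto intro!: derivative_eq_intros)
    have den0: "2 * fst (proj q) \<noteq> 0" using fstP rp by simp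
    note FA0 = has_derivative_divide'[OF has_derivative_mult[OF S1P D2] den den0]
    note FB0 = has_derivative_divide'[OF has_derivative_minus[OF has_derivative_mult[OF S1P D1]] den den0]
    have fa_eq2: "\<forall>p'\<in>Kp. S1 p' * snd (dK K S2 p') / (2 * fst p') = fa p'"
      using fa_eq by simp
    have fb_eq2: "\<forall>p'\<in>Kp. - (S1 p' * fst (dK K S2 p')) / (2 * fst p') = fb p'"
      using fb_eq by simp
    note FA = transf[OF FA0 openKp pKp fa_eq2]
    note FB = transf[OF FB0 openKp pKp fb_eq2]
    have lv: "liftVec T1 = (\<lambda>y. (fa (proj y) * fst y / cylRho y, fa (proj y) * fst (snd y) / cylRho y, fb (proj y)))"
      unfolding liftVec_def fa_def fb_def by (rule ext) simp
    have Omd: "(Om has_derivative (\<lambda>h. fst h * fst (dK K Om (proj q)) + snd h * snd (dK K Om (proj q)))) (at (proj q))"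
      by (rule dK_has[OF atK[OF pKp]]) (use Om_diffK KpK pKp in auto)
    have gam: "gammaProd (lift Om) (lift Om) q = (fst (dK K Om (proj q)))\<^sup>2 + (snd (dK K Om (proj q)))\<^sup>2"
      by (rule gammaProd_lift[OF Omd q0])
    have dv: "div3 (liftVec T1) q = (fst (dK K S1 (proj q)) * snd (dK K S2 (proj q))
                 - snd (dK K S1 (proj q)) * fst (dK K S2 (proj q))) / (2 * r)"
    proof -
      have dv0: "div3 (liftVec T1) q = div3 (\<lambda>y. (fa (proj y) * fst y / cylRho y, fa (proj y) * fst (snd y) / cylRho y, fb (proj y))) q"
        by (simp only: lv)
      note dv1 = trans[OF dv0 div3_lift[OF hd2[OF FA] hd2[OF FB] q0]]
      show ?thesis unfolding dv1 fa_eq[OF pKp] fstP r_def[symmetric]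
        using rp by (simp add: field_simps)
    qed
    have pw: "wedgeK (dK K S1 (proj q)) (dK K S2 (proj q)) = 2 * sinUps y (proj q) * exp (- 4 * U0 (proj q))
               * wedgeK (dK K Om (proj q)) (hodgeK (dK K Om (proj q)))"
      using P1 KpK pKp by blast
    have sp: "sinUps y (proj q) = r * psiY y (proj q)"
      unfolding sinUps_def psiY_def fstP by simp
    show ?thesis
      unfolding dv gam lift_def
      using pw rp unfolding sp wedgeK_def hodgeK_def
      by (simp add: field_simps power2_eq_square)
  qed
  show ?thesis using P1 P2 P3 by blast
qed

end
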